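(* Let $1<w\le 2$, $1<h\le 2$ and $n\ge 2$. There exist reals $\frac12\le y_1<\dots<y_n\le h-\frac12$ such that the instance consisting of the strip $[0,w]\times[0,h]$ and these $y_i$ admits a staircase layout with gap $\frac{w+h-2}{n-1}$.
   Context: A layout is a pair $(\mathbf x,\prec)$ where $\mathbf x=(x_1,\dots,x_n)$ with $x_i\in[\frac12,w-\frac12]$, and $\prec$ is a total order (stacking order) on the squares $s_1,\dots,s_n$, where $s_i$ is the closed axis-parallel unit square with centre $(x_i,y_i)$. If $s_i\prec s_j$ we say $s_j$ is in front of $s_i$ and $s_i$ is behind $s_j$. A point $p$ on the boundary of $s_i$ is visible if every square $s_j$ ($j\neq i$) containing $p$ is behind $s_i$. The visible perimeter of $s_i$ is the total length of its visible boundary points; the gap of $s_i$ is its visible perimeter minus $2$, and the gap of a layout is the minimum of the gaps of its squares. A staircase is a layout in which $x_1\le\dots\le x_n$ or $x_1\ge\dots\ge x_n$, and in which $s_1\prec\dots\prec s_n$ or $s_1\succ\dots\succ s_n$. *)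

theory Defs
  imports "HOL-Analysis.Analysis"
begin

text \<open>Squares are indexed by 1..n; x and y give the centres; prec is the stacking order
  (prec i j means s_i is behind s_j, i.e. s_j is in front of s_i).\<close>

definition usquare :: "real \<Rightarrow> real \<Rightarrow> (real \<times> real) set" where
  "usquare a b = {p. \<bar>fst p - a\<bar> \<le> 1/2 \<and> \<bar>snd p - b\<bar> \<le> 1/2}"

definition strict_total_order_on :: "nat set \<Rightarrow> (nat \<Rightarrow> nat \<Rightarrow> bool) \<Rightarrow> bool" where
  "strict_total_order_on A r \<longleftrightarrow>
     (\<forall>i\<in>A. \<not> r i i) \<and>
     (\<forall>i\<in>A. \<forall>j\<in>A. \<forall>k\<in>A. r i j \<longrightarrow> r j k \<longrightarrow> r i k) \<and>
     (\<forall>i\<in>A. \<forall>j\<in>A. i \<noteq> j \<longrightarrow> r i j \<or> r j i)"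

definition is_layout :: "real \<Rightarrow> nat \<Rightarrow> (nat \<Rightarrow> real) \<Rightarrow> (nat \<Rightarrow> nat \<Rightarrow> bool) \<Rightarrow> bool" where
  "is_layout w n x prec \<longleftrightarrow>
     (\<forall>i\<in>{1..n}. 1/2 \<le> x i \<and> x i \<le> w - 1/2) \<and> strict_total_order_on {1..n} prec"

definition visible :: "nat \<Rightarrow> (nat \<Rightarrow> real) \<Rightarrow> (nat \<Rightarrow> real) \<Rightarrow> (nat \<Rightarrow> nat \<Rightarrow> bool)
                        \<Rightarrow> nat \<Rightarrow> real \<times> real \<Rightarrow> bool" where
  "visible n x y prec i p \<longleftrightarrow>
     p \<in> frontier (usquare (x i) (y i)) \<and>
     (\<forall>j\<in>{1..n}. j \<noteq> i \<longrightarrow> p \<in> usquare (x j) (y j) \<longrightarrow> prec j i)"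

definition side :: "real \<Rightarrow> real \<Rightarrow> nat \<Rightarrow> real \<Rightarrow> real \<times> real" where
  "side a b k t =
     (if k = 0 then (a - 1/2 + t, b - 1/2)
      else if k = 1 then (a - 1/2 + t, b + 1/2)
      else if k = 2 then (a - 1/2, b - 1/2 + t)
      else (a + 1/2, b - 1/2 + t))"

text \<open>Visible perimeter: total length of the visible boundary points (sum over the four sides of
  the length of the visible part; the corners have measure zero).\<close>
definition visible_perimeter :: "nat \<Rightarrow> (nat \<Rightarrow> real) \<Rightarrow> (nat \<Rightarrow> real) \<Rightarrow> (nat \<Rightarrow> nat \<Rightarrow> bool)
                                   \<Rightarrow> nat \<Rightarrow> real" where
  "visible_perimeter n x y prec i =
     (\<Sum>k<4. measure lebesgue {t \<in> {0..1}. visible n x y prec i (side (x i) (y i) k t)})"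

definition square_gap :: "nat \<Rightarrow> (nat \<Rightarrow> real) \<Rightarrow> (nat \<Rightarrow> real) \<Rightarrow> (nat \<Rightarrow> nat \<Rightarrow> bool)
                            \<Rightarrow> nat \<Rightarrow> real" where
  "square_gap n x y prec i = visible_perimeter n x y prec i - 2"

definition layout_gap :: "nat \<Rightarrow> (nat \<Rightarrow> real) \<Rightarrow> (nat \<Rightarrow> real) \<Rightarrow> (nat \<Rightarrow> nat \<Rightarrow> bool) \<Rightarrow> real" where
  "layout_gap n x y prec = Min ((square_gap n x y prec) ` {1..n})"

definition is_staircase :: "nat \<Rightarrow> (nat \<Rightarrow> real) \<Rightarrow> (nat \<Rightarrow> nat \<Rightarrow> bool) \<Rightarrow> bool" where
  "is_staircase n x prec \<longleftrightarrow>
     ((\<forall>i\<in>{1..n}. \<forall>j\<in>{1..n}. i \<le> j \<longrightarrow> x i \<le> x j) \<or>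
      (\<forall>i\<in>{1..n}. \<forall>j\<in>{1..n}. i \<le> j \<longrightarrow> x i \<ge> x j)) \<and>
     ((\<forall>i\<in>{1..n}. \<forall>j\<in>{1..n}. i < j \<longrightarrow> prec i j) \<or>
      (\<forall>i\<in>{1..n}. \<forall>j\<in>{1..n}. i < j \<longrightarrow> prec j i))"

end

theory Submission
  imports Defs
begin
lemma usq: fixes a b :: real shows "usquare a b = cbox (a-1/2,b-1/2) (a+1/2,b+1/2)"
  unfolding usquare_def cbox_Pair_eq by (auto simp: cbox_interval) (auto simp: abs_if split: if_split_asm)
lemma bx: fixes a b :: real shows "box (a-1/2,b-1/2) (a+1/2,b+1/2) = {p. \<bar>fst p - a\<bar> < 1/2 \<and> \<bar>snd p - b\<bar> < 1/2}"
  by (auto simp: mem_box Basis_prod_def) (auto simp: abs_if split: if_split_asm)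
lemma fr: fixes a b :: real shows "p \<in> frontier (usquare a b) \<longleftrightarrow> p \<in> usquare a b \<and> \<not>(\<bar>fst p - a\<bar> < 1/2 \<and> \<bar>snd p - b\<bar> < 1/2)"
  unfolding usq frontier_cbox bx by auto

lemma vp:
  fixes x y :: "nat \<Rightarrow> real" and dx dy x0 y0 :: real
  assumes dx: "0 < dx" "dx \<le> 1" and dy: "0 < dy" "dy \<le> 1"
    and X: "\<And>j. x j = x0 + real j * dx" and Y: "\<And>j. y j = y0 + real j * dy"
  shows "visible_perimeter n x y (<) i = (if i < n then 2 + dx + dy else 4)"
proof -
  have gx: "x i + dx \<le> x j" if "i < j" for i j
  proof -
    have "1 \<le> real j - real i" using that by linarith
    hence "1 * dx \<le> (real j - real i) * dx" using dx by (intro mult_right_mono) auto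
    thus ?thesis unfolding X by (simp add: algebra_simps)
  qed
  have gy: "y i + dy \<le> y j" if "i < j" for i j
  proof -
    have "1 \<le> real j - real i" using that by linarith
    hence "1 * dy \<le> (real j - real i) * dy" using dy by (intro mult_right_mono) auto
    thus ?thesis unfolding Y by (simp add: algebra_simps)
  qed
  have xs: "x (Suc i) = x i + dx" unfolding X by (simp add: algebra_simps)
  have ys: "y (Suc i) = y i + dy" unfolding Y by (simp add: algebra_simps)
  let ?S = "\<lambda>k. {t \<in> {0..1}. visible n x y (<) i (side (x i) (y i) k t)}"
  have S0: "?S 0 = {0..1}"
  proof (intro set_eqI iffI)
    fix t assume t: "t \<in> {0..(1::real)}"
    have "j < i" if "j \<in> {1..n}" "j \<noteq> i" "side (x i) (y i) 0 t \<in> usquare (x j) (y j)" for j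
    proof (rule ccontr)
      assume "\<not> j < i" hence "i < j" using that by simp
      from gy[OF this] that(3) dy show False by (auto simp: side_def usquare_def abs_if split: if_split_asm)
    qed
    moreover have "side (x i) (y i) 0 t \<in> frontier (usquare (x i) (y i))"
      using t unfolding fr by (auto simp: side_def usquare_def abs_if)
    ultimately show "t \<in> ?S 0" using t by (auto simp: visible_def)
  qed auto
  have S2: "?S 2 = {0..1}"
  proof (intro set_eqI iffI)
    fix t assume t: "t \<in> {0..(1::real)}"
    have "j < i" if "j \<in> {1..n}" "j \<noteq> i" "side (x i) (y i) 2 t \<in> usquare (x j) (y j)" for j
    proof (rule ccontr)
      assume "\<not> j < i" hence "i < j" using that by simp
      from gx[OF this] that(3) dx show False by (auto simp: side_def usquare_def abs_if split: if_split_asm)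
    qed
    moreover have "side (x i) (y i) 2 t \<in> frontier (usquare (x i) (y i))"
      using t unfolding fr by (auto simp: side_def usquare_def abs_if)
    ultimately show "t \<in> ?S 2" using t by (auto simp: visible_def)
  qed auto
  have S1: "?S 1 = (if i < n then {0..<dx} else {0..1})"
  proof (intro set_eqI iffI)
    fix t assume t: "t \<in> (if i < n then {0..<dx} else {0..(1::real)})"
    hence t01: "t \<in> {0..1}" using dx by (auto split: if_splits)
    have "j < i" if "j \<in> {1..n}" "j \<noteq> i" "side (x i) (y i) 1 t \<in> usquare (x j) (y j)" for j
    proof (rule ccontr)
      assume "\<not> j < i" hence ij: "i < j" using that by simp
      hence "i < n" using that by auto
      hence "t < dx" using t by auto
      from gx[OF ij] this that(3) dx show False by (auto simp: side_def usquare_def abs_if split: if_split_asm)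
    qed
    moreover have "side (x i) (y i) 1 t \<in> frontier (usquare (x i) (y i))"
      using t01 unfolding fr by (auto simp: side_def usquare_def abs_if)
    ultimately show "t \<in> ?S 1" using t01 by (auto simp: visible_def)
  next
    fix t assume t: "t \<in> ?S 1"
    show "t \<in> (if i < n then {0..<dx} else {0..(1::real)})"
    proof (cases "i < n")
      case True
      show ?thesis
      proof (rule ccontr)
        assume "t \<notin> (if i < n then {0..<dx} else {0..(1::real)})"
        hence tdx: "dx \<le> t" using True t by auto
        have "Suc i \<in> {1..n}" using True by auto
        moreover have "side (x i) (y i) 1 t \<in> usquare (x (Suc i)) (y (Suc i))"
          using t tdx dx dy by (auto simp: side_def usquare_def xs ys abs_if)
        moreover have "\<forall>j\<in>{1..n}. j \<noteq> i \<longrightarrow> side (x i) (y i) 1 t \<in> usquare (x j) (y j) \<longrightarrow> j < i"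
          using t unfolding visible_def by blast
        ultimately have "Suc i < i" using Suc_n_not_n by blast
        thus False by simp
      qed
    qed (use t in auto)
  qed
  have S3: "?S 3 = (if i < n then {0..<dy} else {0..1})"
  proof (intro set_eqI iffI)
    fix t assume t: "t \<in> (if i < n then {0..<dy} else {0..(1::real)})"
    hence t01: "t \<in> {0..1}" using dy by (auto split: if_splits)
    have "j < i" if "j \<in> {1..n}" "j \<noteq> i" "side (x i) (y i) 3 t \<in> usquare (x j) (y j)" for j
    proof (rule ccontr)
      assume "\<not> j < i" hence ij: "i < j" using that by simp
      hence "i < n" using that by auto
      hence "t < dy" using t by auto
      from gy[OF ij] this that(3) dy show False by (auto simp: side_def usquare_def abs_if split: if_split_asm)
    qed
    moreover have "side (x i) (y i) 3 t \<in> frontier (usquare (x i) (y i))"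
      using t01 unfolding fr by (auto simp: side_def usquare_def abs_if)
    ultimately show "t \<in> ?S 3" using t01 by (auto simp: visible_def)
  next
    fix t assume t: "t \<in> ?S 3"
    show "t \<in> (if i < n then {0..<dy} else {0..(1::real)})"
    proof (cases "i < n")
      case True
      show ?thesis
      proof (rule ccontr)
        assume "t \<notin> (if i < n then {0..<dy} else {0..(1::real)})"
        hence tdy: "dy \<le> t" using True t by auto
        have "Suc i \<in> {1..n}" using True by auto
        moreover have "side (x i) (y i) 3 t \<in> usquare (x (Suc i)) (y (Suc i))"
          using t tdy dx dy by (auto simp: side_def usquare_def xs ys abs_if)
        moreover have "\<forall>j\<in>{1..n}. j \<noteq> i \<longrightarrow> side (x i) (y i) 3 t \<in> usquare (x j) (y j) \<longrightarrow> j < i"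
          using t unfolding visible_def by blast
        ultimately have "Suc i < i" using Suc_n_not_n by blast
        thus False by simp
      qed
    qed (use t in auto)
  qed
  have "visible_perimeter n x y (<) i = measure lebesgue (?S 0) + measure lebesgue (?S 1)
       + measure lebesgue (?S 2) + measure lebesgue (?S 3)"
    unfolding visible_perimeter_def by (simp add: numeral_eq_Suc)
  also have "\<dots> = (if i < n then 2 + dx + dy else 4)"
    unfolding S0 S1 S2 S3 using dx dy by auto
  finally show ?thesis .
qed
theorem lemma5:
  fixes w h :: real and n :: nat
  assumes "1 < w" "w \<le> 2" "1 < h" "h \<le> 2" "n \<ge> 2"
  shows "\<exists>y :: nat \<Rightarrow> real.
           (\<forall>i\<in>{1..n}. 1/2 \<le> y i \<and> y i \<le> h - 1/2) \<and>
           (\<forall>i\<in>{1..n}. \<forall>j\<in>{1..n}. i < j \<longrightarrow> y i < y j) \<and>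
           (\<exists>x prec. is_layout w n x prec \<and> is_staircase n x prec \<and>
              layout_gap n x y prec = (w + h - 2) / (real n - 1))"
proof -
  define m where "m = real n - 1"
  have m1: "1 \<le> m" using assms(5) unfolding m_def by simp
  define dx where "dx = (w - 1) / m"
  define dy where "dy = (h - 1) / m"
  have dx: "0 < dx" "dx \<le> 1" using assms m1 unfolding dx_def by (auto simp: divide_le_eq_1)
  have dy: "0 < dy" "dy \<le> 1" using assms m1 unfolding dy_def by (auto simp: divide_le_eq_1)
  have dxm: "m * dx = w - 1" using m1 unfolding dx_def by simp
  have dym: "m * dy = h - 1" using m1 unfolding dy_def by simp
  define x where "x = (\<lambda>j::nat. (1/2 - dx) + real j * dx)"
  define y where "y = (\<lambda>j::nat. (1/2 - dy) + real j * dy)"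
  have xe: "x j = 1/2 + (real j - 1) * dx" for j unfolding x_def by (simp add: algebra_simps)
  have ye: "y j = 1/2 + (real j - 1) * dy" for j unfolding y_def by (simp add: algebra_simps)
  have rng: "0 \<le> real j - 1 \<and> real j - 1 \<le> m" if "j \<in> {1..n}" for j
    using that unfolding m_def by auto
  have xr: "1/2 \<le> x j \<and> x j \<le> w - 1/2" if "j \<in> {1..n}" for j
  proof -
    have "0 \<le> (real j - 1) * dx" using rng[OF that] dx by simp
    moreover have "(real j - 1) * dx \<le> m * dx" using rng[OF that] dx by (intro mult_right_mono) auto
    ultimately show ?thesis unfolding xe using dxm by linarith
  qed
  have yr: "1/2 \<le> y j \<and> y j \<le> h - 1/2" if "j \<in> {1..n}" for j
  proof -
    have "0 \<le> (real j - 1) * dy" using rng[OF that] dy by simp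
    moreover have "(real j - 1) * dy \<le> m * dy" using rng[OF that] dy by (intro mult_right_mono) auto
    ultimately show ?thesis unfolding ye using dym by linarith
  qed
  have xmono: "x i \<le> x j" if "i \<le> j" for i j
    unfolding x_def using that dx by (simp add: mult_right_mono)
  have ymono: "y i < y j" if "i < j" for i j
    unfolding y_def using that dy by (simp add: mult_strict_right_mono)
  have lay: "is_layout w n x (<)"
    unfolding is_layout_def strict_total_order_on_def using xr by auto
  have st: "is_staircase n x (<)"
    unfolding is_staircase_def using xmono by auto
  have sg: "square_gap n x y (<) i = (if i < n then dx + dy else 2)" for i
    unfolding square_gap_def using vp[OF dx dy x_def[THEN fun_cong] y_def[THEN fun_cong]]
    by simp
  have "layout_gap n x y (<) = dx + dy"
    unfolding layout_gap_def
  proof (rule Min_eqI)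
    show "finite (square_gap n x y (<) ` {1..n})" by simp
    show "dx + dy \<in> square_gap n x y (<) ` {1..n}"
      using assms(5) by (intro image_eqI[of _ _ 1]) (auto simp: sg)
    show "dx + dy \<le> g" if "g \<in> square_gap n x y (<) ` {1..n}" for g
      using that dx dy by (auto simp: sg)
  qed
  also have "dx + dy = (w + h - 2) / (real n - 1)"
    unfolding dx_def dy_def m_def by (simp add: add_divide_distrib[symmetric])
  finally have "layout_gap n x y (<) = (w + h - 2) / (real n - 1)" .
  thus ?thesis using yr ymono lay st by blast
qed
end
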